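(* Let $m,n\ge 1$, $M=\{1,\dots,m\}$, $N=\{1,\dots,n\}$. (i) For BQAP1 with data $Q=(q_{ijk\ell})$ ($m\times n\times m\times n$) and $m\times n$ matrices $c,d$, the average $\mathcal{A}_1(Q,c,d)$ of the objective value $f_1(x,y)$ over all feasible solutions equals $$\mathcal{A}_1(Q,c,d)=\frac{1}{mn}\sum_{i=1}^m\sum_{j=1}^n\sum_{k=1}^m\sum_{\ell=1}^n q_{ijk\ell}+\frac{1}{n}\sum_{i=1}^m\sum_{j=1}^n c_{ij}+\frac{1}{m}\sum_{i=1}^m\sum_{j=1}^n d_{ij}.$$ (ii) For BQAP2 with data $Q=(q_{ijk\ell})$ ($m\times m\times n\times n$), an $m\times m$ matrix $c$ and an $n\times n$ matrix $d$, the average $\mathcal{A}_2(Q,c,d)$ of $f_2(x,y)$ over all feasible solutions equals $$\mathcal{A}_2(Q,c,d)=\frac{1}{mn}\sum_{i=1}^m\sum_{j=1}^m\sum_{k=1}^n\sum_{\ell=1}^n q_{ijk\ell}+\frac{1}{m}\sum_{i=1}^m\sum_{j=1}^m c_{ij}+\frac{1}{n}\sum_{i=1}^n\sum_{j=1}^n d_{ij}.$$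
   Context: BQAP1: the feasible solutions are pairs $(x,y)$ of $m\times n$ 0-1 matrices with $\sum_{j=1}^n x_{ij}=1$ for every $i\in M$ and $\sum_{i=1}^m y_{ij}=1$ for every $j\in N$ (there are $n^m m^n$ of them); the objective is $f_1(x,y)=\sum_{i,k\in M}\sum_{j,\ell\in N} q_{ijk\ell}x_{ij}y_{k\ell}+\sum_{i\in M,j\in N}c_{ij}x_{ij}+\sum_{i\in M,j\in N}d_{ij}y_{ij}$. BQAP2: feasible solutions are pairs $(x,y)$ with $x$ an $m\times m$ 0-1 matrix satisfying $\sum_{j=1}^m x_{ij}=1$ for all $i\in M$ and $y$ an $n\times n$ 0-1 matrix satisfying $\sum_{i=1}^n y_{ij}=1$ for all $j\in N$ (there are $m^m n^n$ of them); the objective is $f_2(x,y)=\sum_{i,j\in M}\sum_{k,\ell\in N} q_{ijk\ell}x_{ij}y_{k\ell}+\sum_{i,j\in M}c_{ij}x_{ij}+\sum_{i,j\in N}d_{ij}y_{ij}$. All data are real numbers. *)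

theory Defs
  imports Complex_Main
begin

text \<open>0-1 matrices are represented as functions nat => nat => real, with entries in {0,1}
  and entries outside the index range (rows/columns starting at 1) fixed to 0, so that the
  set of feasible solutions is exactly the finite set of pairs of matrices described in the paper.\<close>

definition zero_one_matrix :: "nat \<Rightarrow> nat \<Rightarrow> (nat \<Rightarrow> nat \<Rightarrow> real) \<Rightarrow> bool" where
  "zero_one_matrix r s x \<longleftrightarrow>
     (\<forall>i j. x i j \<in> {0, 1}) \<and> (\<forall>i j. (i \<notin> {1..r} \<or> j \<notin> {1..s}) \<longrightarrow> x i j = 0)"

definition bqap1_feasible :: "nat \<Rightarrow> nat \<Rightarrow> ((nat \<Rightarrow> nat \<Rightarrow> real) \<times> (nat \<Rightarrow> nat \<Rightarrow> real)) set" where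
  "bqap1_feasible m n = {(x, y).
     zero_one_matrix m n x \<and> zero_one_matrix m n y \<and>
     (\<forall>i\<in>{1..m}. (\<Sum>j=1..n. x i j) = 1) \<and>
     (\<forall>j\<in>{1..n}. (\<Sum>i=1..m. y i j) = 1)}"

definition bqap2_feasible :: "nat \<Rightarrow> nat \<Rightarrow> ((nat \<Rightarrow> nat \<Rightarrow> real) \<times> (nat \<Rightarrow> nat \<Rightarrow> real)) set" where
  "bqap2_feasible m n = {(x, y).
     zero_one_matrix m m x \<and> zero_one_matrix n n y \<and>
     (\<forall>i\<in>{1..m}. (\<Sum>j=1..m. x i j) = 1) \<and>
     (\<forall>j\<in>{1..n}. (\<Sum>i=1..n. y i j) = 1)}"

definition bqap1_obj ::
  "nat \<Rightarrow> nat \<Rightarrow> (nat \<Rightarrow> nat \<Rightarrow> nat \<Rightarrow> nat \<Rightarrow> real) \<Rightarrow> (nat \<Rightarrow> nat \<Rightarrow> real) \<Rightarrow> (nat \<Rightarrow> nat \<Rightarrow> real)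
   \<Rightarrow> (nat \<Rightarrow> nat \<Rightarrow> real) \<Rightarrow> (nat \<Rightarrow> nat \<Rightarrow> real) \<Rightarrow> real" where
  "bqap1_obj m n q c d x y =
     (\<Sum>i=1..m. \<Sum>k=1..m. \<Sum>j=1..n. \<Sum>l=1..n. q i j k l * x i j * y k l)
     + (\<Sum>i=1..m. \<Sum>j=1..n. c i j * x i j)
     + (\<Sum>i=1..m. \<Sum>j=1..n. d i j * y i j)"

definition bqap2_obj ::
  "nat \<Rightarrow> nat \<Rightarrow> (nat \<Rightarrow> nat \<Rightarrow> nat \<Rightarrow> nat \<Rightarrow> real) \<Rightarrow> (nat \<Rightarrow> nat \<Rightarrow> real) \<Rightarrow> (nat \<Rightarrow> nat \<Rightarrow> real)
   \<Rightarrow> (nat \<Rightarrow> nat \<Rightarrow> real) \<Rightarrow> (nat \<Rightarrow> nat \<Rightarrow> real) \<Rightarrow> real" where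
  "bqap2_obj m n q c d x y =
     (\<Sum>i=1..m. \<Sum>j=1..m. \<Sum>k=1..n. \<Sum>l=1..n. q i j k l * x i j * y k l)
     + (\<Sum>i=1..m. \<Sum>j=1..m. c i j * x i j)
     + (\<Sum>i=1..n. \<Sum>j=1..n. d i j * y i j)"

definition average :: "'a set \<Rightarrow> ('a \<Rightarrow> real) \<Rightarrow> real" where
  "average S f = (\<Sum>p\<in>S. f p) / real (card S)"

end

theory Submission
  imports Defs
begin

definition RS :: "nat \<Rightarrow> nat \<Rightarrow> (nat \<Rightarrow> nat \<Rightarrow> real) set" where
  "RS r s = {x. zero_one_matrix r s x \<and> (\<forall>i\<in>{1..r}. (\<Sum>j=1..s. x i j) = 1)}"
definition CS :: "nat \<Rightarrow> nat \<Rightarrow> (nat \<Rightarrow> nat \<Rightarrow> real) set" where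
  "CS r s = {y. zero_one_matrix r s y \<and> (\<forall>j\<in>{1..s}. (\<Sum>i=1..r. y i j) = 1)}"

lemma zom_finite: "finite {x. zero_one_matrix r s x}"
proof -
  have "{x. zero_one_matrix r s x} \<subseteq> (\<lambda>S. \<lambda>i j. if (i,j)\<in>S then 1 else 0) ` Pow ({1..r}\<times>{1..s})"
  proof
    fix x assume "x \<in> {x. zero_one_matrix r s x}"
    hence h: "zero_one_matrix r s x" by simp
    let ?S = "{(i,j). x i j = 1}"
    have h2: "\<forall>i j. (i \<notin> {1..r} \<or> j \<notin> {1..s}) \<longrightarrow> x i j = 0"
      using h unfolding zero_one_matrix_def by (rule conjunct2)
    have "?S \<subseteq> {1..r}\<times>{1..s}"
    proof
      fix p assume "p \<in> ?S"
      then obtain i j where p: "p = (i,j)" "x i j = 1" by blast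
      have "i \<in> {1..r} \<and> j \<in> {1..s}"
      proof (rule ccontr)
        assume "\<not> (i \<in> {1..r} \<and> j \<in> {1..s})"
        hence "x i j = 0" using h2 by blast
        thus False using p by simp
      qed
      thus "p \<in> {1..r}\<times>{1..s}" using p by simp
    qed
    moreover have "x = (\<lambda>i j. if (i,j)\<in>?S then 1 else 0)"
      using h unfolding zero_one_matrix_def by (intro ext) auto
    ultimately show "x \<in> (\<lambda>S. \<lambda>i j. if (i,j)\<in>S then 1 else 0) ` Pow ({1..r}\<times>{1..s})" by blast
  qed
  thus ?thesis by (rule finite_subset) simp
qed

lemma RS_finite: "finite (RS r s)"
  by (rule finite_subset[OF _ zom_finite[of r s]]) (auto simp: RS_def)
lemma CS_finite: "finite (CS r s)"
  by (rule finite_subset[OF _ zom_finite[of r s]]) (auto simp: CS_def)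

lemma RS_ne: assumes "s \<ge> 1" shows "RS r s \<noteq> {}"
proof -
  let ?x = "\<lambda>i j. if i\<in>{1..r} \<and> j = 1 then 1 else (0::real)"
  have "?x \<in> RS r s" using assms
    by (auto simp: RS_def zero_one_matrix_def if_distrib sum.delta cong: if_cong)
  thus ?thesis by blast
qed

definition tsw :: "nat \<Rightarrow> nat \<Rightarrow> nat \<Rightarrow> nat" where
  "tsw a b k = (if k = a then b else if k = b then a else k)"

lemma tsw_inv: "tsw a b (tsw a b k) = k" by (auto simp: tsw_def)

lemma tsw_bij: assumes "a \<in> S" "b \<in> S" shows "bij_betw (tsw a b) S S"
  by (rule bij_betw_byWitness[where f'="tsw a b"]) (use assms in \<open>auto simp: tsw_def\<close>)

definition sig :: "nat \<Rightarrow> nat \<Rightarrow> nat \<Rightarrow> (nat \<Rightarrow> nat \<Rightarrow> real) \<Rightarrow> (nat \<Rightarrow> nat \<Rightarrow> real)" where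
  "sig i a b x = (\<lambda>p q. if p = i then x p (tsw a b q) else x p q)"

lemma sig_inv: "sig i a b (sig i a b x) = x"
  by (intro ext) (auto simp: sig_def tsw_inv)

lemma sig_RS: assumes "i \<in> {1..r}" "a \<in> {1..s}" "b \<in> {1..s}" "x \<in> RS r s"
  shows "sig i a b x \<in> RS r s"
proof -
  have zo: "zero_one_matrix r s x" and rows: "\<forall>i\<in>{1..r}. (\<Sum>j=1..s. x i j) = 1"
    using assms(4) by (auto simp: RS_def)
  have v: "\<forall>p q. x p q \<in> {0,1}" using zo unfolding zero_one_matrix_def by (rule conjunct1)
  have o: "\<forall>p q. (p \<notin> {1..r} \<or> q \<notin> {1..s}) \<longrightarrow> x p q = 0"
    using zo unfolding zero_one_matrix_def by (rule conjunct2)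
  have sv: "sig i a b x p q \<in> {0,1}" for p q using v by (simp add: sig_def)
  have so: "sig i a b x p q = 0" if pq: "p \<notin> {1..r} \<or> q \<notin> {1..s}" for p q
  proof (cases "p = i")
    case True
    then have qn: "q \<notin> {1..s}" using pq assms(1) by blast
    hence "q \<noteq> a" "q \<noteq> b" using assms(2,3) by blast+
    hence "tsw a b q = q" by (simp add: tsw_def)
    thus ?thesis using True o qn by (simp add: sig_def)
  next
    case False thus ?thesis using o pq by (simp add: sig_def)
  qed
  have "zero_one_matrix r s (sig i a b x)"
    unfolding zero_one_matrix_def using sv so by blast
  moreover have "(\<Sum>j=1..s. sig i a b x p j) = 1" if p: "p \<in> {1..r}" for p
  proof (cases "p = i")
    case True
    have "(\<Sum>j=1..s. sig i a b x p j) = (\<Sum>j=1..s. x p (tsw a b j))"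
      using True by (simp add: sig_def)
    also have "\<dots> = (\<Sum>j=1..s. x p j)"
      using sum.reindex_bij_betw[OF tsw_bij[OF assms(2,3)], of "x p"] by simp
    finally show ?thesis using rows p by simp
  next
    case False thus ?thesis using rows p by (simp add: sig_def)
  qed
  ultimately show ?thesis by (simp add: RS_def)
qed

lemma RS_sum: assumes "i \<in> {1..r}" "j \<in> {1..s}"
  shows "(\<Sum>x\<in>RS r s. x i j) = real (card (RS r s)) * (1 / real s)"
proof -
  have eq: "(\<Sum>x\<in>RS r s. x i a) = (\<Sum>x\<in>RS r s. x i j)" if a: "a \<in> {1..s}" for a
  proof -
    have bij: "bij_betw (sig i a j) (RS r s) (RS r s)"
      by (rule bij_betw_byWitness[where f'="sig i a j"])
         (use sig_RS[OF assms(1) a assms(2)] sig_inv in auto)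
    have "(\<Sum>x\<in>RS r s. x i j) = (\<Sum>x\<in>RS r s. sig i a j x i j)"
      using sum.reindex_bij_betw[OF bij, of "\<lambda>x. x i j"] by simp
    also have "\<dots> = (\<Sum>x\<in>RS r s. x i a)" by (simp add: sig_def tsw_def)
    finally show ?thesis by simp
  qed
  have "real (card (RS r s)) = (\<Sum>x\<in>RS r s. \<Sum>a=1..s. x i a)"
    using assms(1) by (simp add: RS_def)
  also have "\<dots> = (\<Sum>a=1..s. \<Sum>x\<in>RS r s. x i a)" by (rule sum.swap)
  also have "\<dots> = real s * (\<Sum>x\<in>RS r s. x i j)" using eq by simp
  finally have "real (card (RS r s)) = real s * (\<Sum>x\<in>RS r s. x i j)" .
  moreover have "s \<ge> 1" using assms(2) by simp
  ultimately show ?thesis by (simp add: field_simps)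
qed

definition tr :: "(nat \<Rightarrow> nat \<Rightarrow> real) \<Rightarrow> (nat \<Rightarrow> nat \<Rightarrow> real)" where
  "tr y = (\<lambda>i j. y j i)"

lemma tr_img: "tr ` CS r s = RS s r"
proof -
  have a: "tr y \<in> RS s r" if "y \<in> CS r s" for y
  proof -
    have h: "(\<forall>i j. y i j \<in> {0, 1}) \<and> (\<forall>i j. (i \<notin> {1..r} \<or> j \<notin> {1..s}) \<longrightarrow> y i j = 0)"
      "\<forall>j\<in>{1..s}. (\<Sum>i=1..r. y i j) = 1"
      using that unfolding CS_def zero_one_matrix_def by simp_all
    have "(\<forall>i j. tr y i j \<in> {0, 1}) \<and> (\<forall>i j. (i \<notin> {1..s} \<or> j \<notin> {1..r}) \<longrightarrow> tr y i j = 0)"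
      using h(1) unfolding tr_def by blast
    moreover have "\<forall>i\<in>{1..s}. (\<Sum>j=1..r. tr y i j) = 1" using h(2) unfolding tr_def by blast
    ultimately show ?thesis unfolding RS_def zero_one_matrix_def by blast
  qed
  have b: "tr x \<in> CS r s" if "x \<in> RS s r" for x
  proof -
    have h: "(\<forall>i j. x i j \<in> {0, 1}) \<and> (\<forall>i j. (i \<notin> {1..s} \<or> j \<notin> {1..r}) \<longrightarrow> x i j = 0)"
      "\<forall>i\<in>{1..s}. (\<Sum>j=1..r. x i j) = 1"
      using that unfolding RS_def zero_one_matrix_def by simp_all
    have "(\<forall>i j. tr x i j \<in> {0, 1}) \<and> (\<forall>i j. (i \<notin> {1..r} \<or> j \<notin> {1..s}) \<longrightarrow> tr x i j = 0)"
      using h(1) unfolding tr_def by blast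
    moreover have "\<forall>j\<in>{1..s}. (\<Sum>i=1..r. tr x i j) = 1" using h(2) unfolding tr_def by blast
    ultimately show ?thesis unfolding CS_def zero_one_matrix_def by blast
  qed
  have "RS s r \<subseteq> tr ` CS r s"
  proof
    fix x assume "x \<in> RS s r"
    hence "tr x \<in> CS r s" by (rule b)
    moreover have "x = tr (tr x)" by (simp add: tr_def)
    ultimately show "x \<in> tr ` CS r s" by blast
  qed
  moreover have "tr ` CS r s \<subseteq> RS s r" using a by blast
  ultimately show ?thesis by blast
qed

lemma tr_tr: "tr (tr x) = x" by (simp add: tr_def)
lemma tr_inj: "inj_on tr S"
  by (rule inj_onI) (metis tr_tr)

lemma CS_sum: assumes "i \<in> {1..r}" "j \<in> {1..s}"
  shows "(\<Sum>y\<in>CS r s. y i j) = real (card (CS r s)) * (1 / real r)"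
proof -
  have "(\<Sum>y\<in>CS r s. y i j) = (\<Sum>y\<in>CS r s. tr y j i)" by (simp add: tr_def)
  also have "\<dots> = (\<Sum>x\<in>tr ` CS r s. x j i)" by (simp add: sum.reindex[OF tr_inj])
  also have "\<dots> = real (card (RS s r)) * (1 / real r)" using RS_sum[OF assms(2,1)] tr_img by simp
  also have "card (RS s r) = card (CS r s)" using card_image[OF tr_inj, of "CS r s"] tr_img by simp
  finally show ?thesis .
qed

lemma CS_ne: assumes "r \<ge> 1" shows "CS r s \<noteq> {}"
  using RS_ne[OF assms, of s] tr_img[of r s] by auto

lemma prodlem: "(\<Sum>y\<in>B. \<Sum>x\<in>A. (q::real) * x i j * y k l) = q * ((\<Sum>x\<in>A. x i j) * (\<Sum>y\<in>B. y k l))"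
proof -
  have "(\<Sum>y\<in>B. \<Sum>x\<in>A. (q::real) * x i j * y k l) = q * (\<Sum>y\<in>B. \<Sum>x\<in>A. x i j * y k l)"
    by (simp add: sum_distrib_left mult.assoc)
  also have "(\<Sum>y\<in>B. \<Sum>x\<in>A. x i j * y k l) = (\<Sum>x\<in>A. \<Sum>y\<in>B. x i j * y k l)"
    by (rule sum.swap)
  also have "\<dots> = (\<Sum>x\<in>A. x i j) * (\<Sum>y\<in>B. y k l)" by (rule sum_product[symmetric])
  finally show ?thesis .
qed

lemma avg_gen:
  fixes A B :: "(nat \<Rightarrow> nat \<Rightarrow> real) set"
  assumes fA: "finite A" and fB: "finite B" and nA: "A \<noteq> {}" and nB: "B \<noteq> {}"
    and SA: "\<And>i j. i \<in> I \<Longrightarrow> j \<in> J \<Longrightarrow> (\<Sum>x\<in>A. x i j) = real (card A) * \<alpha>"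
    and SB: "\<And>k l. k \<in> K \<Longrightarrow> l \<in> L \<Longrightarrow> (\<Sum>y\<in>B. y k l) = real (card B) * \<beta>"
  shows "average (A \<times> B) (\<lambda>(x,y). (\<Sum>i\<in>I. \<Sum>j\<in>J. \<Sum>k\<in>K. \<Sum>l\<in>L. q i j k l * x i j * y k l)
          + (\<Sum>i\<in>I. \<Sum>j\<in>J. c i j * x i j) + (\<Sum>k\<in>K. \<Sum>l\<in>L. d k l * y k l))
       = \<alpha> * \<beta> * (\<Sum>i\<in>I. \<Sum>j\<in>J. \<Sum>k\<in>K. \<Sum>l\<in>L. q i j k l)
         + \<alpha> * (\<Sum>i\<in>I. \<Sum>j\<in>J. c i j) + \<beta> * (\<Sum>k\<in>K. \<Sum>l\<in>L. d k l)"
proof -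
  let ?a = "real (card A)" and ?b = "real (card B)"
  have a0: "?a > 0" and b0: "?b > 0" using fA fB nA nB by (auto simp: card_gt_0_iff)
  have "(\<Sum>x\<in>A. \<Sum>y\<in>B. \<Sum>i\<in>I. \<Sum>j\<in>J. \<Sum>k\<in>K. \<Sum>l\<in>L. q i j k l * x i j * y k l)
     = (\<Sum>i\<in>I. \<Sum>j\<in>J. \<Sum>k\<in>K. \<Sum>l\<in>L. \<Sum>y\<in>B. \<Sum>x\<in>A. q i j k l * x i j * y k l)"
    apply (simp only: sum.swap[of _ B])
    apply (simp only: sum.swap[of _ A])
    done
  also have "\<dots> = (\<Sum>i\<in>I. \<Sum>j\<in>J. \<Sum>k\<in>K. \<Sum>l\<in>L. q i j k l * (?a * \<alpha>) * (?b * \<beta>))"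
  proof (intro sum.cong refl)
    fix i j k l assume "i \<in> I" "j \<in> J" "k \<in> K" "l \<in> L"
    have "(\<Sum>y\<in>B. \<Sum>x\<in>A. q i j k l * x i j * y k l) = q i j k l * ((\<Sum>x\<in>A. x i j) * (\<Sum>y\<in>B. y k l))"
      by (rule prodlem)
    thus "(\<Sum>y\<in>B. \<Sum>x\<in>A. q i j k l * x i j * y k l) = q i j k l * (?a * \<alpha>) * (?b * \<beta>)"
      using SA SB \<open>i \<in> I\<close> \<open>j \<in> J\<close> \<open>k \<in> K\<close> \<open>l \<in> L\<close> by simp
  qed
  also have "\<dots> = ?a * ?b * (\<alpha> * \<beta> * (\<Sum>i\<in>I. \<Sum>j\<in>J. \<Sum>k\<in>K. \<Sum>l\<in>L. q i j k l))"
    by (simp only: sum_distrib_left sum_distrib_right mult_ac)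
  finally have t1: "(\<Sum>x\<in>A. \<Sum>y\<in>B. \<Sum>i\<in>I. \<Sum>j\<in>J. \<Sum>k\<in>K. \<Sum>l\<in>L. q i j k l * x i j * y k l) = \<dots>" .
  have sw1: "(\<Sum>x\<in>A. \<Sum>i\<in>I. \<Sum>j\<in>J. c i j * x i j) = (\<Sum>i\<in>I. \<Sum>j\<in>J. \<Sum>x\<in>A. c i j * x i j)"
    by (simp only: sum.swap[of _ A])
  have "(\<Sum>x\<in>A. \<Sum>y\<in>B. \<Sum>i\<in>I. \<Sum>j\<in>J. c i j * x i j)
      = (\<Sum>x\<in>A. ?b * (\<Sum>i\<in>I. \<Sum>j\<in>J. c i j * x i j))" by simp
  also have "\<dots> = ?b * (\<Sum>x\<in>A. \<Sum>i\<in>I. \<Sum>j\<in>J. c i j * x i j)"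
    by (rule sum_distrib_left[symmetric])
  also have "\<dots> = ?b * (\<Sum>i\<in>I. \<Sum>j\<in>J. \<Sum>x\<in>A. c i j * x i j)"
    by (simp only: sw1)
  also have "\<dots> = ?b * (\<Sum>i\<in>I. \<Sum>j\<in>J. c i j * (?a * \<alpha>))"
    using SA by (simp add: sum_distrib_left[symmetric])
  also have "\<dots> = ?a * ?b * (\<alpha> * (\<Sum>i\<in>I. \<Sum>j\<in>J. c i j))"
    by (simp only: sum_distrib_left sum_distrib_right mult_ac)
  finally have t2: "(\<Sum>x\<in>A. \<Sum>y\<in>B. \<Sum>i\<in>I. \<Sum>j\<in>J. c i j * x i j) = \<dots>" .
  have sw2: "(\<Sum>y\<in>B. \<Sum>k\<in>K. \<Sum>l\<in>L. d k l * y k l) = (\<Sum>k\<in>K. \<Sum>l\<in>L. \<Sum>y\<in>B. d k l * y k l)"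
    by (simp only: sum.swap[of _ B])
  have "(\<Sum>x\<in>A. \<Sum>y\<in>B. \<Sum>k\<in>K. \<Sum>l\<in>L. d k l * y k l)
      = ?a * (\<Sum>y\<in>B. \<Sum>k\<in>K. \<Sum>l\<in>L. d k l * y k l)" by simp
  also have "\<dots> = ?a * (\<Sum>k\<in>K. \<Sum>l\<in>L. \<Sum>y\<in>B. d k l * y k l)"
    by (simp only: sw2)
  also have "\<dots> = ?a * (\<Sum>k\<in>K. \<Sum>l\<in>L. d k l * (?b * \<beta>))"
    using SB by (simp add: sum_distrib_left[symmetric])
  also have "\<dots> = ?a * ?b * (\<beta> * (\<Sum>k\<in>K. \<Sum>l\<in>L. d k l))"
    by (simp only: sum_distrib_left sum_distrib_right mult_ac)
  finally have t3: "(\<Sum>x\<in>A. \<Sum>y\<in>B. \<Sum>k\<in>K. \<Sum>l\<in>L. d k l * y k l) = \<dots>" .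
  have "average (A \<times> B) (\<lambda>(x,y). (\<Sum>i\<in>I. \<Sum>j\<in>J. \<Sum>k\<in>K. \<Sum>l\<in>L. q i j k l * x i j * y k l)
          + (\<Sum>i\<in>I. \<Sum>j\<in>J. c i j * x i j) + (\<Sum>k\<in>K. \<Sum>l\<in>L. d k l * y k l))
     = ((\<Sum>x\<in>A. \<Sum>y\<in>B. \<Sum>i\<in>I. \<Sum>j\<in>J. \<Sum>k\<in>K. \<Sum>l\<in>L. q i j k l * x i j * y k l)
        + (\<Sum>x\<in>A. \<Sum>y\<in>B. \<Sum>i\<in>I. \<Sum>j\<in>J. c i j * x i j)
        + (\<Sum>x\<in>A. \<Sum>y\<in>B. \<Sum>k\<in>K. \<Sum>l\<in>L. d k l * y k l)) / (?a * ?b)"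
    unfolding average_def sum.cartesian_product[symmetric] card_cartesian_product
    by (simp add: sum.distrib)
  also have "\<dots> = ?a * ?b * (\<alpha> * \<beta> * (\<Sum>i\<in>I. \<Sum>j\<in>J. \<Sum>k\<in>K. \<Sum>l\<in>L. q i j k l)
         + \<alpha> * (\<Sum>i\<in>I. \<Sum>j\<in>J. c i j) + \<beta> * (\<Sum>k\<in>K. \<Sum>l\<in>L. d k l)) / (?a * ?b)"
    unfolding t1 t2 t3 by (simp add: algebra_simps)
  also have "\<dots> = \<alpha> * \<beta> * (\<Sum>i\<in>I. \<Sum>j\<in>J. \<Sum>k\<in>K. \<Sum>l\<in>L. q i j k l)
         + \<alpha> * (\<Sum>i\<in>I. \<Sum>j\<in>J. c i j) + \<beta> * (\<Sum>k\<in>K. \<Sum>l\<in>L. d k l)"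
    using a0 b0 by simp
  finally show ?thesis .
qed

theorem theorem1:
  fixes m n :: nat
    and q :: "nat \<Rightarrow> nat \<Rightarrow> nat \<Rightarrow> nat \<Rightarrow> real"
    and c d :: "nat \<Rightarrow> nat \<Rightarrow> real"
  assumes "m \<ge> 1" and "n \<ge> 1"
  shows "(average (bqap1_feasible m n) (\<lambda>(x, y). bqap1_obj m n q c d x y) =
           (\<Sum>i=1..m. \<Sum>j=1..n. \<Sum>k=1..m. \<Sum>l=1..n. q i j k l) / (real m * real n)
         + (\<Sum>i=1..m. \<Sum>j=1..n. c i j) / real n
         + (\<Sum>i=1..m. \<Sum>j=1..n. d i j) / real m)
    \<and> (average (bqap2_feasible m n) (\<lambda>(x, y). bqap2_obj m n q c d x y) =
           (\<Sum>i=1..m. \<Sum>j=1..m. \<Sum>k=1..n. \<Sum>l=1..n. q i j k l) / (real m * real n)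
         + (\<Sum>i=1..m. \<Sum>j=1..m. c i j) / real m
         + (\<Sum>i=1..n. \<Sum>j=1..n. d i j) / real n)"
proof -
  have F1: "bqap1_feasible m n = RS m n \<times> CS m n"
    by (auto simp: bqap1_feasible_def RS_def CS_def)
  have F2: "bqap2_feasible m n = RS m m \<times> CS n n"
    by (auto simp: bqap2_feasible_def RS_def CS_def)
  have O1p: "bqap1_obj m n q c d x y =
      (\<Sum>i\<in>{1..m}. \<Sum>j\<in>{1..n}. \<Sum>k\<in>{1..m}. \<Sum>l\<in>{1..n}. q i j k l * x i j * y k l)
      + (\<Sum>i\<in>{1..m}. \<Sum>j\<in>{1..n}. c i j * x i j) + (\<Sum>k\<in>{1..m}. \<Sum>l\<in>{1..n}. d k l * y k l)" for x y
  proof -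
    have "(\<Sum>i=1..m. \<Sum>k=1..m. \<Sum>j=1..n. \<Sum>l=1..n. q i j k l * x i j * y k l)
        = (\<Sum>i=1..m. \<Sum>j=1..n. \<Sum>k=1..m. \<Sum>l=1..n. q i j k l * x i j * y k l)"
      by (rule sum.cong[OF refl], rule sum.swap)
    thus ?thesis unfolding bqap1_obj_def by simp
  qed
  have O1: "(\<lambda>(x, y). bqap1_obj m n q c d x y) = (\<lambda>(x,y).
      (\<Sum>i\<in>{1..m}. \<Sum>j\<in>{1..n}. \<Sum>k\<in>{1..m}. \<Sum>l\<in>{1..n}. q i j k l * x i j * y k l)
      + (\<Sum>i\<in>{1..m}. \<Sum>j\<in>{1..n}. c i j * x i j) + (\<Sum>k\<in>{1..m}. \<Sum>l\<in>{1..n}. d k l * y k l))"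
    by (simp only: O1p)
  have A1: "average (bqap1_feasible m n) (\<lambda>(x, y). bqap1_obj m n q c d x y)
     = (1 / real n) * (1 / real m) * (\<Sum>i=1..m. \<Sum>j=1..n. \<Sum>k=1..m. \<Sum>l=1..n. q i j k l)
       + (1 / real n) * (\<Sum>i=1..m. \<Sum>j=1..n. c i j) + (1 / real m) * (\<Sum>i=1..m. \<Sum>j=1..n. d i j)"
    unfolding F1 O1
    by (rule avg_gen[OF RS_finite CS_finite RS_ne CS_ne RS_sum CS_sum]) (use assms in auto)
  have A2: "average (bqap2_feasible m n) (\<lambda>(x, y). bqap2_obj m n q c d x y)
     = (1 / real m) * (1 / real n) * (\<Sum>i=1..m. \<Sum>j=1..m. \<Sum>k=1..n. \<Sum>l=1..n. q i j k l)
       + (1 / real m) * (\<Sum>i=1..m. \<Sum>j=1..m. c i j) + (1 / real n) * (\<Sum>i=1..n. \<Sum>j=1..n. d i j)"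
    unfolding F2 bqap2_obj_def
    by (rule avg_gen[OF RS_finite CS_finite RS_ne CS_ne RS_sum CS_sum]) (use assms in auto)
  show ?thesis unfolding A1 A2 by (simp add: divide_inverse mult_ac)
qed

end
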